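(* Let $k$ be an algebraically closed field, let $1\le s\le t$ be integers, $R=k[x,y]/(x^s,y^t)$ with its standard grading, and $\theta$ the image of $x+y$ in $R$. Let $\zeta,\eta$ be nonzero homogeneous elements of $R$. If $\sigma(k[\theta]\zeta)\neq\sigma(k[\theta]\eta)$, then $k[\theta]\zeta\cap k[\theta]\eta=\{0\}$; hence $k[\theta]\zeta+k[\theta]\eta=k[\theta]\zeta\oplus k[\theta]\eta$.
   Context: $R=\bigoplus_i R_i$ where $R_i$ is spanned by the images of monomials of degree $i$. For a nonzero homogeneous element $\zeta\in R_m$, the socle degree $\sigma(k[\theta]\zeta)$ of the cyclic $k[\theta]$-module $k[\theta]\zeta$ is the integer $d$ such that the socle of $k[\theta]\zeta$ as a $k[\theta]$-module is contained in $R_d$; equivalently $d=m+e$ where $e$ is the largest integer with $\theta^e\zeta\neq0$. *)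

theory Defs
  imports "HOL-Computational_Algebra.Polynomial"
begin

text \<open>Concrete model of R = k[x,y]/(x^s,y^t): an element is its coefficient
  function (i,j) \<mapsto> coefficient of x^i y^j, vanishing unless i<s and j<t.
  The monomials x^i y^j with i<s, j<t form a k-basis of R.\<close>

type_synonym 'k qelem = "nat \<Rightarrow> nat \<Rightarrow> 'k"

definition Rset :: "nat \<Rightarrow> nat \<Rightarrow> ('k::zero) qelem set" where
  "Rset s t = {f. \<forall>i j. (s \<le> i \<or> t \<le> j) \<longrightarrow> f i j = 0}"

definition rzero :: "('k::zero) qelem" where
  "rzero = (\<lambda>i j. 0)"

definition radd :: "('k::plus) qelem \<Rightarrow> 'k qelem \<Rightarrow> 'k qelem" where
  "radd f g = (\<lambda>i j. f i j + g i j)"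

definition rscale :: "'k::times \<Rightarrow> 'k qelem \<Rightarrow> 'k qelem" where
  "rscale c f = (\<lambda>i j. c * f i j)"

text \<open>Multiplication in R (product in k[x,y] followed by truncation).\<close>
definition rmult :: "nat \<Rightarrow> nat \<Rightarrow> ('k::comm_ring_1) qelem \<Rightarrow> 'k qelem \<Rightarrow> 'k qelem" where
  "rmult s t f g = (\<lambda>i j. if i < s \<and> j < t
      then (\<Sum>a\<le>i. \<Sum>b\<le>j. f a b * g (i - a) (j - b)) else 0)"

definition rone :: "nat \<Rightarrow> nat \<Rightarrow> ('k::comm_ring_1) qelem" where
  "rone s t = (\<lambda>i j. if i = 0 \<and> j = 0 \<and> 0 < s \<and> 0 < t then 1 else 0)"

definition theta :: "nat \<Rightarrow> nat \<Rightarrow> ('k::comm_ring_1) qelem" where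
  "theta s t = (\<lambda>i j. (if i = 1 \<and> j = 0 \<and> 1 < s \<and> 0 < t then 1 else 0)
                      + (if i = 0 \<and> j = 1 \<and> 0 < s \<and> 1 < t then 1 else 0))"

definition theta_pow :: "nat \<Rightarrow> nat \<Rightarrow> nat \<Rightarrow> ('k::comm_ring_1) qelem" where
  "theta_pow s t e = ((rmult s t (theta s t)) ^^ e) (rone s t)"

definition homog :: "('k::zero) qelem \<Rightarrow> nat \<Rightarrow> bool" where
  "homog f m \<longleftrightarrow> (\<forall>i j. f i j \<noteq> 0 \<longrightarrow> i + j = m)"

definition cyc :: "nat \<Rightarrow> nat \<Rightarrow> ('k::comm_ring_1) qelem \<Rightarrow> 'k qelem set" where
  "cyc s t z = {f. \<exists>(c :: nat \<Rightarrow> 'k) N.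
      f = (\<lambda>i j. \<Sum>e<N. c e * rmult s t (theta_pow s t e) z i j)}"

text \<open>Socle of the k[theta]-module M \<subseteq> R: elements annihilated by theta
  (i.e. by the graded maximal ideal of k[theta]).\<close>
definition socle :: "nat \<Rightarrow> nat \<Rightarrow> ('k::comm_ring_1) qelem set \<Rightarrow> 'k qelem set" where
  "socle s t M = {v \<in> M. rmult s t (theta s t) v = rzero}"

definition socle_degree :: "nat \<Rightarrow> nat \<Rightarrow> ('k::comm_ring_1) qelem \<Rightarrow> nat" where
  "socle_degree s t z = (THE d. socle s t (cyc s t z) \<subseteq> {v. homog v d})"

end

theory Submission imports Defs "HOL-Computational_Algebra.Formal_Power_Series" begin

definition E2 :: "('k::comm_ring_1) qelem \<Rightarrow> 'k fps fps" where
  "E2 f = Abs_fps (\<lambda>i. Abs_fps (\<lambda>j. f i j))"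

abbreviation nth2 :: "'k fps fps \<Rightarrow> nat \<Rightarrow> nat \<Rightarrow> 'k" where
  "nth2 A i j \<equiv> fps_nth (fps_nth A i) j"

lemma E2_nth[simp]: "nth2 (E2 f) i j = f i j"
  by (simp add: E2_def)

lemma conv2: "nth2 ((A::('k::comm_ring_1) fps fps) * B) i j
   = (\<Sum>a\<le>i. \<Sum>b\<le>j. nth2 A a b * nth2 B (i-a) (j-b))"
  by (simp add: fps_mult_nth fps_sum_nth atLeast0AtMost)

lemma rmult_E2: "rmult s t f g = (\<lambda>i j. if i < s \<and> j < t then nth2 (E2 f * E2 g) i j else 0)"
  unfolding rmult_def conv2 E2_nth by simp

lemma conv2_local:
  assumes "\<And>a b. a \<le> i \<Longrightarrow> b \<le> j \<Longrightarrow> nth2 A a b = nth2 A' a b"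
  shows "nth2 ((A::('k::comm_ring_1) fps fps) * B) i j = nth2 (A' * B) i j"
  unfolding conv2 using assms by (intro sum.cong refl) auto

lemma rmult_assoc: "rmult s t (rmult s t f g) h = rmult s t f (rmult s t g h)"
proof (rule ext, rule ext)
  fix i j
  show "rmult s t (rmult s t f g) h i j = rmult s t f (rmult s t g h) i j"
  proof (cases "i < s \<and> j < t")
    case True
    have "nth2 (E2 (rmult s t f g) * E2 h) i j = nth2 (E2 f * E2 g * E2 h) i j"
      by (rule conv2_local) (use True in \<open>auto simp: rmult_E2\<close>)
    moreover have "nth2 (E2 (rmult s t g h) * E2 f) i j = nth2 (E2 g * E2 h * E2 f) i j"
      by (rule conv2_local) (use True in \<open>auto simp: rmult_E2\<close>)
    ultimately show ?thesis using True
      by (simp add: rmult_E2 mult.commute mult.left_commute)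
  qed (auto simp: rmult_def)
qed

lemma homog_rmult:
  assumes "homog f p" "homog g q"
  shows "homog (rmult s t f g) (p + q)"
  unfolding homog_def
proof (intro allI impI)
  fix i j assume "rmult s t f g i j \<noteq> 0"
  then have "(\<Sum>a\<le>i. \<Sum>b\<le>j. f a b * g (i - a) (j - b)) \<noteq> 0"
    by (auto simp: rmult_def split: if_splits)
  then obtain a where a: "a \<le> i" "(\<Sum>b\<le>j. f a b * g (i - a) (j - b)) \<noteq> 0"
    by (rule sum.not_neutral_contains_not_neutral) auto
  then obtain b where b: "b \<le> j" "f a b * g (i - a) (j - b) \<noteq> 0"
    by (metis (no_types, lifting) atMost_iff sum.not_neutral_contains_not_neutral)
  then have "f a b \<noteq> 0" "g (i - a) (j - b) \<noteq> 0" by auto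
  then have "a + b = p" "(i - a) + (j - b) = q" using assms unfolding homog_def by blast+
  then show "i + j = p + q" using a b by simp
qed

lemma homog_theta: "homog (theta s t) 1"
  by (auto simp: homog_def theta_def split: if_splits)

lemma homog_rone: "homog (rone s t) 0"
  by (auto simp: homog_def rone_def split: if_splits)

lemma theta_pow_Suc: "theta_pow s t (Suc e) = rmult s t (theta s t) (theta_pow s t e)"
  by (simp add: theta_pow_def)

lemma theta_pow_0: "theta_pow s t 0 = rone s t"
  by (simp add: theta_pow_def)

lemma homog_theta_pow: "homog (theta_pow s t e) e"
proof (induction e)
  case 0 then show ?case by (simp add: theta_pow_0 homog_rone)
next
  case (Suc e)
  then show ?case using homog_rmult[OF homog_theta Suc, of s t]
    by (simp add: theta_pow_Suc)
qed

lemma rmult_Rset: "rmult s t f g \<in> Rset s t"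
  by (auto simp: Rset_def rmult_def)

lemma homog_Rset_zero:
  assumes "f \<in> Rset s t" "homog f n" "s + t \<le> n + 1"
  shows "f = rzero"
proof (rule ext, rule ext)
  fix i j
  show "f i j = rzero i j"
  proof (rule ccontr)
    assume "f i j \<noteq> rzero i j"
    then have "f i j \<noteq> 0" by (simp add: rzero_def)
    then have "i < s" "j < t" "i + j = n" using assms(1,2)
      by (auto simp: Rset_def homog_def) (meson not_le)+
    then show False using assms(3) by simp
  qed
qed

lemma rmult_rzero: "rmult s t f rzero = rzero"
  by (simp add: rmult_def rzero_def fun_eq_iff)

lemma rmult_rone:
  assumes "z \<in> Rset s t" "1 \<le> s" "1 \<le> t"
  shows "rmult s t (rone s t) z = z"
proof (rule ext, rule ext)
  fix i j
  show "rmult s t (rone s t) z i j = z i j"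
  proof (cases "i < s \<and> j < t")
    case True
    have "(\<Sum>a\<le>i. \<Sum>b\<le>j. rone s t a b * z (i - a) (j - b))
        = (\<Sum>a\<le>i. if a = 0 then z i j else 0)"
    proof (rule sum.cong[OF refl])
      fix a assume "a \<in> {..i}"
      show "(\<Sum>b\<le>j. rone s t a b * z (i - a) (j - b)) = (if a = 0 then z i j else 0)"
        using assms by (simp add: rone_def if_distrib[where f="\<lambda>x. x * _"] sum.delta cong: if_cong)
    qed
    then show ?thesis using True by (simp add: rmult_def sum.delta)
  next
    case False
    then show ?thesis using assms(1) by (auto simp: rmult_def Rset_def)
  qed
qed

lemma rmult_lin:
  "rmult s t f (\<lambda>i j. \<Sum>e\<in>A. c e * F e i j) = (\<lambda>i j. \<Sum>e\<in>A. c e * rmult s t f (F e) i j)"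
proof (rule ext, rule ext)
  fix i j
  have "(\<Sum>a\<le>i. \<Sum>b\<le>j. f a b * (\<Sum>e\<in>A. c e * F e (i - a) (j - b)))
      = (\<Sum>e\<in>A. c e * (\<Sum>a\<le>i. \<Sum>b\<le>j. f a b * F e (i - a) (j - b)))"
    by (simp add: sum_distrib_left sum_distrib_right mult.left_commute sum.swap[where A=A])
  then show "rmult s t f (\<lambda>i j. \<Sum>e\<in>A. c e * F e i j) i j = (\<Sum>e\<in>A. c e * rmult s t f (F e) i j)"
    by (cases "i < s \<and> j < t") (auto simp: rmult_def)
qed

definition lowdeg :: "('k::zero) qelem \<Rightarrow> nat \<Rightarrow> bool" where
  "lowdeg u r \<longleftrightarrow> (\<forall>i j. i + j < r \<longrightarrow> u i j = 0)"

lemma lowdeg_rmult: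
  assumes "lowdeg f p" "lowdeg g q"
  shows "lowdeg (rmult s t f g) (p + q)"
  unfolding lowdeg_def
proof (intro allI impI)
  fix i j assume ij: "i + j < p + q"
  have "f a b * g (i - a) (j - b) = 0" if "a \<le> i" "b \<le> j" for a b
  proof (cases "a + b < p")
    case True then show ?thesis using assms(1) by (simp add: lowdeg_def)
  next
    case False
    then have "(i - a) + (j - b) < q" using ij that by simp
    then show ?thesis using assms(2) by (simp add: lowdeg_def)
  qed
  then show "rmult s t f g i j = 0" by (simp add: rmult_def)
qed

lemma lowdeg_theta: "lowdeg (theta s t) 1"
  by (simp add: lowdeg_def theta_def)

lemma lowdeg_iter: "lowdeg ((rmult s t (theta s t) ^^ r) w) r"
proof (induction r)
  case 0 then show ?case by (simp add: lowdeg_def)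
next
  case (Suc r)
  then show ?case using lowdeg_rmult[OF lowdeg_theta Suc, of s t] by simp
qed

lemma iter_zero:
  assumes "1 \<le> s" "1 \<le> t"
  shows "(rmult s t (theta s t) ^^ (s + t)) w = rzero"
proof -
  obtain r where r: "s + t = Suc r" using assms by (cases "s + t") auto
  have R: "(rmult s t (theta s t) ^^ (s + t)) w \<in> Rset s t"
    unfolding r by (simp add: rmult_Rset)
  show ?thesis
  proof (rule ext, rule ext)
    fix i j
    show "(rmult s t (theta s t) ^^ (s + t)) w i j = rzero i j"
    proof (cases "i < s \<and> j < t")
      case True
      then show ?thesis using lowdeg_iter[where s=s and t=t and r="s+t" and w=w] by (simp add: lowdeg_def rzero_def)
    next
      case False
      then show ?thesis using R by (auto simp: Rset_def rzero_def)
    qed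
  qed
qed

lemma degsum:
  fixes F :: "nat \<Rightarrow> ('k::comm_ring_1) qelem"
  assumes "\<And>e. homog (F e) (m + e)" "i + j = m + e0"
  shows "(\<Sum>e<N. c e * F e i j) = (if e0 < N then c e0 * F e0 i j else 0)"
proof -
  have "(\<Sum>e<N. c e * F e i j) = (\<Sum>e<N. if e = e0 then c e * F e i j else 0)"
  proof (rule sum.cong[OF refl])
    fix e assume "e \<in> {..<N}"
    show "c e * F e i j = (if e = e0 then c e * F e i j else 0)"
    proof (cases "e = e0")
      case False
      have "F e i j \<noteq> 0 \<longrightarrow> i + j = m + e" using assms(1)[of e] unfolding homog_def by blast
      then have "F e i j = 0" using assms(2) False by auto
      then show ?thesis using False by simp
    qed simp
  qed
  then show ?thesis by (simp add: sum.delta)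
qed

context
  fixes s t :: nat and z :: "('k::field) qelem" and m :: nat
  assumes s1: "1 \<le> s" and t1: "1 \<le> t" and zR: "z \<in> Rset s t"
    and znz: "z \<noteq> rzero" and zh: "homog z m"
begin

definition T :: "nat \<Rightarrow> 'k qelem" where
  "T e = rmult s t (theta_pow s t e) z"

lemma T_Suc: "T (Suc e) = rmult s t (theta s t) (T e)"
  by (simp add: T_def theta_pow_Suc rmult_assoc)

lemma T_0: "T 0 = z"
  unfolding T_def theta_pow_0 using rmult_rone[OF zR s1 t1] .

lemma T_homog: "homog (T e) (m + e)"
  unfolding T_def using homog_rmult[OF homog_theta_pow[where s=s and t=t and e=e] zh, where s=s and t=t]
  by (simp add: add.commute)

lemma T_large: "s + t \<le> m + e + 1 \<Longrightarrow> T e = rzero"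
  by (rule homog_Rset_zero[OF _ T_homog]) (auto simp: T_def rmult_Rset)

lemma T_mono: assumes "T e = rzero" "e \<le> e'" shows "T e' = rzero"
  using assms(2)
proof (induction e' rule: dec_induct)
  case base then show ?case using assms(1) .
next
  case (step n) then show ?case by (simp add: T_Suc rmult_rzero)
qed


definition Emax :: nat where
  "Emax = Max {e. T e \<noteq> rzero}"

lemma Eset_fin: "finite {e. T e \<noteq> rzero}"
proof (rule finite_subset[of _ "{..<s+t}"])
  show "{e. T e \<noteq> rzero} \<subseteq> {..<s+t}"
    using T_large by (auto simp: not_less)
qed simp

lemma T_Emax: "T Emax \<noteq> rzero"
proof -
  have "0 \<in> {e. T e \<noteq> rzero}" using T_0 znz by simp
  then have "Emax \<in> {e. T e \<noteq> rzero}" unfolding Emax_def using Eset_fin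
    by (intro Max_in) auto
  then show ?thesis by simp
qed

lemma T_le_Emax: "T e \<noteq> rzero \<Longrightarrow> e \<le> Emax"
  unfolding Emax_def using Eset_fin by (intro Max_ge) auto

lemma T_below: "e \<le> Emax \<Longrightarrow> T e \<noteq> rzero"
  using T_mono T_Emax by blast

lemma T_after: "T (Suc Emax) = rzero"
  using T_le_Emax by fastforce

lemma cyc_form: "w \<in> cyc s t z \<longleftrightarrow> (\<exists>c N. w = (\<lambda>i j. \<Sum>e<N. c e * T e i j))"
  by (simp add: cyc_def T_def)

lemma cycI: "w = (\<lambda>i j. \<Sum>e<N. c e * T e i j) \<Longrightarrow> w \<in> cyc s t z"
  unfolding cyc_def T_def by blast

lemma cyc_theta: "w \<in> cyc s t z \<Longrightarrow> rmult s t (theta s t) w \<in> cyc s t z"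
proof -
  assume "w \<in> cyc s t z"
  then obtain c N where w: "w = (\<lambda>i j. \<Sum>e<N. c e * T e i j)" by (auto simp: cyc_form)
  define c' where "c' = (\<lambda>e. case e of 0 \<Rightarrow> 0 | Suc e' \<Rightarrow> c e')"
  have "rmult s t (theta s t) w = (\<lambda>i j. \<Sum>e<N. c e * T (Suc e) i j)"
    by (simp add: w rmult_lin T_Suc)
  also have "\<dots> = (\<lambda>i j. \<Sum>e<Suc N. c' e * T e i j)"
    by (simp only: sum.lessThan_Suc_shift) (simp add: c'_def)
  finally show ?thesis by (rule cycI)
qed

lemma cyc_iter: "w \<in> cyc s t z \<Longrightarrow> (rmult s t (theta s t) ^^ r) w \<in> cyc s t z"
  by (induction r) (auto intro: cyc_theta)

lemma cyc_zero: "rzero \<in> cyc s t z"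
  unfolding cyc_form by (rule exI[of _ "\<lambda>_. 0"], rule exI[of _ 0]) (simp add: rzero_def)

lemma cyc_neg: "w \<in> cyc s t z \<Longrightarrow> (\<lambda>i j. - w i j) \<in> cyc s t z"
proof -
  assume "w \<in> cyc s t z"
  then obtain c N where w: "w = (\<lambda>i j. \<Sum>e<N. c e * T e i j)" by (auto simp: cyc_form)
  have "(\<lambda>i j. - w i j) = (\<lambda>i j. \<Sum>e<N. (- c e) * T e i j)"
    by (simp add: w sum_negf)
  then show ?thesis by (rule cycI)
qed

lemma lemA:
  assumes "w \<in> cyc s t z" "rmult s t (theta s t) w = rzero"
  shows "homog w (m + Emax)"
proof -
  obtain c N where w: "w = (\<lambda>i j. \<Sum>e<N. c e * T e i j)" using assms(1) unfolding cyc_form by blast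
  have tw: "rmult s t (theta s t) w = (\<lambda>i j. \<Sum>e<N. c e * T (Suc e) i j)"
    by (simp add: w rmult_lin T_Suc)
  have c0: "c e = 0" if "e < N" "e < Emax" for e
  proof -
    have "T (Suc e) \<noteq> rzero" using T_below[of "Suc e"] that by simp
    then obtain i j where ij: "T (Suc e) i j \<noteq> 0" by (auto simp: rzero_def fun_eq_iff)
    have "\<forall>i j. T (Suc e) i j \<noteq> 0 \<longrightarrow> i + j = m + Suc e" using T_homog[of "Suc e"] unfolding homog_def .
    then have deg: "i + j = (m + 1) + e" using ij by simp
    have H: "homog (T (Suc e')) ((m + 1) + e')" for e' using T_homog[of "Suc e'"] by simp
    have "(\<lambda>i j. \<Sum>e<N. c e * T (Suc e) i j) = rzero" using assms(2) tw by simp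
    from fun_cong[OF fun_cong[OF this, of i], of j]
    have S0: "(\<Sum>e<N. c e * T (Suc e) i j) = 0" by (simp add: rzero_def)
    have "(\<Sum>e<N. c e * T (Suc e) i j) = (if e < N then c e * T (Suc e) i j else 0)"
      by (rule degsum[where F="\<lambda>e. T (Suc e)" and m="m + 1" and N=N and c=c, OF H deg])
    then have "(\<Sum>e<N. c e * T (Suc e) i j) = c e * T (Suc e) i j"
      by (simp only: if_P[OF that(1)])
    then have "c e * T (Suc e) i j = 0" using S0 by simp
    then show ?thesis using ij by simp
  qed
  show ?thesis unfolding homog_def
  proof (intro allI impI)
    fix i j assume nz: "w i j \<noteq> 0"
    then have "(\<Sum>e<N. c e * T e i j) \<noteq> 0" using w by simp
    then obtain e where e: "e < N" "c e * T e i j \<noteq> 0"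
      by (rule sum.not_neutral_contains_not_neutral) auto
    then have Te: "T e i j \<noteq> 0" "c e \<noteq> 0" by auto
    have "\<forall>i j. T e i j \<noteq> 0 \<longrightarrow> i + j = m + e" using T_homog[of e] unfolding homog_def .
    then have deg: "i + j = m + e" using Te by simp
    have "T e \<noteq> rzero" using Te by (auto simp: rzero_def fun_eq_iff)
    then have "e \<le> Emax" by (rule T_le_Emax)
    moreover have "\<not> e < Emax" using c0 e Te by auto
    ultimately show "i + j = m + Emax" using deg by simp
  qed
qed

lemma TE_socle: "T Emax \<in> socle s t (cyc s t z)"
proof -
  have "T Emax = (\<lambda>i j. \<Sum>e<Suc Emax. (if e = Emax then 1 else 0) * T e i j)"
    by (simp add: if_distrib[where f="\<lambda>x. x * _"] sum.delta cong: if_cong)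
  then have "T Emax \<in> cyc s t z" by (rule cycI)
  then show ?thesis using T_after by (simp add: socle_def T_Suc[symmetric])
qed

lemma sdeg: "socle_degree s t z = m + Emax"
  unfolding socle_degree_def
proof (rule the_equality)
  show "socle s t (cyc s t z) \<subseteq> {v. homog v (m + Emax)}"
    using lemA by (auto simp: socle_def)
next
  fix d assume "socle s t (cyc s t z) \<subseteq> {v. homog v d}"
  then have "homog (T Emax) d" using TE_socle by auto
  moreover obtain i j where "T Emax i j \<noteq> 0" using T_Emax by (auto simp: rzero_def fun_eq_iff)
  ultimately show "d = m + Emax" using T_homog[of Emax] by (auto simp: homog_def)
qed

lemma socle_homog: "v \<in> socle s t (cyc s t z) \<Longrightarrow> homog v (socle_degree s t z)"
  using lemA by (auto simp: socle_def sdeg)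

end


theorem lemma2p13:
  fixes s t :: nat and zeta eta :: "('k::alg_closed_field) qelem"
  assumes "1 \<le> s" and "s \<le> t"
    and "zeta \<in> Rset s t" and "zeta \<noteq> rzero" and "\<exists>m. homog zeta m"
    and "eta \<in> Rset s t" and "eta \<noteq> rzero" and "\<exists>m. homog eta m"
    and "socle_degree s t zeta \<noteq> socle_degree s t eta"
  shows "cyc s t zeta \<inter> cyc s t eta = {rzero}
    \<and> (\<forall>a \<in> cyc s t zeta. \<forall>b \<in> cyc s t eta. radd a b = rzero \<longrightarrow> a = rzero \<and> b = rzero)"
proof -
  obtain m1 where h1: "homog zeta m1" using assms(5) by blast
  obtain m2 where h2: "homog eta m2" using assms(8) by blast
  have s1: "1 \<le> s" and t1: "1 \<le> t" using assms(1,2) by auto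
  note A1 = assms(3,4) h1 and A2 = assms(6,7) h2
  let ?f = "rmult s t (theta s t)"
  have Z: "w = rzero" if w1: "w \<in> cyc s t zeta" and w2: "w \<in> cyc s t eta" for w
  proof (rule ccontr)
    assume wnz: "w \<noteq> rzero"
    define r0 where "r0 = (LEAST r. (?f ^^ r) w = rzero)"
    have "(?f ^^ (s + t)) w = rzero" by (rule iter_zero[OF s1 t1])
    then have r0z: "(?f ^^ r0) w = rzero" unfolding r0_def by (rule LeastI)
    then have "r0 \<noteq> 0" using wnz by (auto)
    then obtain r where r: "r0 = Suc r" by (cases r0) auto
    have vnz: "(?f ^^ r) w \<noteq> rzero" using not_less_Least[of r "\<lambda>r. (?f ^^ r) w = rzero"]
      r unfolding r0_def by simp
    define v where "v = (?f ^^ r) w"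
    have fv: "?f v = rzero" using r0z r by (simp add: v_def)
    have v1: "v \<in> socle s t (cyc s t zeta)"
      using cyc_iter[OF s1 t1 A1 w1] fv by (simp add: socle_def v_def)
    have v2: "v \<in> socle s t (cyc s t eta)"
      using cyc_iter[OF s1 t1 A2 w2] fv by (simp add: socle_def v_def)
    have d1: "homog v (socle_degree s t zeta)" by (rule socle_homog[OF s1 t1 A1 v1])
    have d2: "homog v (socle_degree s t eta)" by (rule socle_homog[OF s1 t1 A2 v2])
    obtain i j where "v i j \<noteq> 0" using vnz by (auto simp: v_def rzero_def fun_eq_iff)
    then have "socle_degree s t zeta = socle_degree s t eta"
      using d1 d2 unfolding homog_def by metis
    then show False using assms(9) by simp
  qed
  have P1: "cyc s t zeta \<inter> cyc s t eta = {rzero}"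
    using Z cyc_zero[OF s1 t1 A1] cyc_zero[OF s1 t1 A2] by blast
  have P2: "a = rzero \<and> b = rzero"
    if a: "a \<in> cyc s t zeta" and b: "b \<in> cyc s t eta" and ab: "radd a b = rzero" for a b
  proof -
    have "a = (\<lambda>i j. - b i j)" using ab
      by (auto simp: radd_def rzero_def fun_eq_iff eq_neg_iff_add_eq_0)
    then have "a \<in> cyc s t eta" using cyc_neg[OF s1 t1 A2 b] by simp
    then have a0: "a = rzero" using Z a by blast
    then have "b = rzero" using ab by (simp add: radd_def rzero_def fun_eq_iff)
    then show ?thesis using a0 by simp
  qed
  show ?thesis using P1 P2 by blast
qed

end
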